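(* Let $q=\{q_n\}_{n\geq1}$ be a system of Beurling primes with $\sigma_c(\zeta_q)<\infty$. Then for almost every $x\in\mathbb{R}$, $$\mu_q(x)\leq 2\sigma_c(\zeta_q).$$
   Context: A system of Beurling primes is an increasing sequence $q=\{q_n\}$ of real numbers with $1<q_n\to\infty$ such that $\{\log q_n\}$ is linearly independent over $\mathbb{Q}$; its Beurling integers $\{\nu_n\}_{n\geq1}$ are all finite products of elements of $q$ (including $1$), listed increasingly. $\zeta_q(s)=\sum_n\nu_n^{-s}$ and $\sigma_c(\zeta_q)$ is its abscissa of convergence. For $x\in\mathbb{R}$, the $q$-irrationality measure $\mu_q(x)$ is the infimum of the set of $r>0$ such that $|x-\nu_m/\nu_n|<\nu_n^{-r}$ holds for at most finitely many pairs $(m,n)\in\mathbb{N}\times\mathbb{N}$. *)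

theory Defs
  imports "HOL-Analysis.Analysis"
begin

text \<open>A system of Beurling primes, indexed from 0: a strictly increasing real sequence
  with all terms > 1, tending to infinity, whose logarithms are linearly independent over Q.\<close>
definition beurling_primes :: "(nat \<Rightarrow> real) \<Rightarrow> bool" where
  "beurling_primes q \<longleftrightarrow>
     strict_mono q \<and> (\<forall>n. 1 < q n) \<and> filterlim q at_top sequentially \<and>
     (\<forall>F (c :: nat \<Rightarrow> rat). finite F \<longrightarrow>
        (\<Sum>i\<in>F. of_rat (c i) * ln (q i)) = 0 \<longrightarrow> (\<forall>i\<in>F. c i = 0))"

definition beurling_integers :: "(nat \<Rightarrow> real) \<Rightarrow> real set" where
  "beurling_integers q = {prod_list (map q xs) | xs. True}"

text \<open>The Beurling integers listed increasingly (indexed from 0).\<close>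
definition beurling_nu :: "(nat \<Rightarrow> real) \<Rightarrow> nat \<Rightarrow> real" where
  "beurling_nu q = (SOME f. strict_mono f \<and> range f = beurling_integers q)"

definition beurling_sigma_c :: "(nat \<Rightarrow> real) \<Rightarrow> ereal" where
  "beurling_sigma_c q =
     Inf {ereal (Re s) | s :: complex.
            summable (\<lambda>n. complex_of_real (beurling_nu q n) powr (- s))}"

text \<open>The q-irrationality measure of x (as an extended real; Inf of the empty set is \<infinity>).\<close>
definition beurling_mu :: "(nat \<Rightarrow> real) \<Rightarrow> real \<Rightarrow> ereal" where
  "beurling_mu q x =
     Inf {ereal r | r. r > 0 \<and>
            finite {(m, n). \<bar>x - beurling_nu q m / beurling_nu q n\<bar> < beurling_nu q n powr (- r)}}"

end

theory Submission
  imports Defs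
begin

lemma one_le_mult_real: "1 \<le> (a::real) \<Longrightarrow> 1 \<le> b \<Longrightarrow> 1 \<le> a * b"
  using mult_mono[of 1 a 1 b] by simp

lemma prod_ge1: "\<forall>i. 1 < q i \<Longrightarrow> 1 \<le> prod_list (map q xs :: real list)"
proof (induction xs)
  case Nil then show ?case by simp
next
  case (Cons a xs)
  have "1 \<le> q a" using Cons(2) by (simp add: less_imp_le)
  then show ?case using Cons one_le_mult_real by simp
qed

lemma prod_ge_each: "\<forall>i. 1 < q i \<Longrightarrow> x \<in> set xs \<Longrightarrow> q x \<le> prod_list (map q xs :: real list)"
proof (induction xs)
  case Nil then show ?case by simp
next
  case (Cons a xs)
  have h1: "1 \<le> prod_list (map q xs)" using prod_ge1 Cons by blast
  show ?case
  proof (cases "x = a")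
    case True
    have "1 \<le> q a" using Cons(2) by (simp add: less_imp_le)
    then show ?thesis using True h1 mult_left_mono[of 1 "prod_list (map q xs)" "q a"] by simp
  next
    case False
    then have "q x \<le> prod_list (map q xs)" using Cons by auto
    moreover have "1 \<le> q a" using Cons(2) by (simp add: less_imp_le)
    moreover have "prod_list (map q xs) \<le> q a * prod_list (map q xs)"
      using \<open>1 \<le> q a\<close> h1 mult_right_mono[of 1 "q a" "prod_list (map q xs)"] by auto
    ultimately show ?thesis by simp
  qed
qed

lemma prod_ge_pow: "\<forall>i. 1 < q i \<Longrightarrow> \<forall>i. q 0 \<le> q i \<Longrightarrow> q 0 ^ length xs \<le> prod_list (map q xs :: real list)"
proof (induction xs)
  case Nil then show ?case by simp
next
  case (Cons a xs)
  have h: "q 0 ^ length xs \<le> prod_list (map q xs)" using Cons by blast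
  have q00: "0 \<le> q 0" using Cons(2) by (metis less_imp_le order.strict_trans zero_less_one)
  have "q 0 \<le> q a" using Cons(3) by blast
  then have "q 0 * q 0 ^ length xs \<le> q a * prod_list (map q xs)"
    using h q00 by (intro mult_mono) auto
  then show ?case by simp
qed

lemma bi_ge1: "beurling_primes q \<Longrightarrow> v \<in> beurling_integers q \<Longrightarrow> 1 \<le> v"
  unfolding beurling_primes_def beurling_integers_def using prod_ge1 by blast

lemma bi_finite:
  assumes "beurling_primes q"
  shows "finite {v \<in> beurling_integers q. v \<le> X}"
proof -
  have sm: "strict_mono q" and g1: "\<forall>i. 1 < q i" and lim: "filterlim q at_top sequentially"
    using assms unfolding beurling_primes_def by auto
  have q0: "\<forall>i. q 0 \<le> q i" using sm by (simp add: strict_mono_less_eq)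
  obtain N where N: "\<forall>i\<ge>N. X < q i"
    using lim unfolding filterlim_at_top_dense eventually_sequentially by auto
  have "1 < q 0" using g1 by blast
  then obtain L where L: "X < q 0 ^ L" using real_arch_pow by blast
  have "{v \<in> beurling_integers q. v \<le> X} \<subseteq> (\<lambda>xs. prod_list (map q xs)) ` {xs. set xs \<subseteq> {..<N} \<and> length xs \<le> L}"
  proof
    fix v assume v: "v \<in> {v \<in> beurling_integers q. v \<le> X}"
    then obtain xs where xs: "v = prod_list (map q xs)" unfolding beurling_integers_def by auto
    have "set xs \<subseteq> {..<N}"
    proof
      fix i assume "i \<in> set xs"
      then have "q i \<le> v" using prod_ge_each[OF g1, of i xs] xs by simp
      show "i \<in> {..<N}"
      proof (rule ccontr)
        assume "i \<notin> {..<N}"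
        then have "X < q i" using N by simp
        then show False using \<open>q i \<le> v\<close> v by simp
      qed
    qed
    moreover have "length xs \<le> L"
    proof (rule ccontr)
      assume "\<not> length xs \<le> L"
      then have "q 0 ^ L \<le> q 0 ^ length xs" using g1 by (intro power_increasing) (auto simp: less_imp_le)
      also have "\<dots> \<le> v" using prod_ge_pow[OF g1 q0, of xs] xs by simp
      finally show False using v L by auto
    qed
    ultimately show "v \<in> (\<lambda>xs. prod_list (map q xs)) ` {xs. set xs \<subseteq> {..<N} \<and> length xs \<le> L}"
      using xs by auto
  qed
  moreover have "finite {xs. set xs \<subseteq> {..<N} \<and> length xs \<le> L}"
    by (rule finite_lists_length_le) auto
  ultimately show ?thesis by (meson finite_imageI finite_subset)
qed

lemma bi_infinite:
  assumes "beurling_primes q"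
  shows "infinite (beurling_integers q)"
proof -
  have qi: "q i \<in> beurling_integers q" for i
    unfolding beurling_integers_def by (rule CollectI, rule exI[of _ "[i]"]) simp
  have sub: "range q \<subseteq> beurling_integers q" using qi by blast
  have "inj q" using assms unfolding beurling_primes_def by (simp add: strict_mono_imp_inj_on)
  show ?thesis
  proof
    assume "finite (beurling_integers q)"
    then have "finite (range q)" by (rule finite_subset[OF sub])
    then have "finite (UNIV :: nat set)" by (rule finite_imageD[OF _ \<open>inj q\<close>])
    then show False by simp
  qed
qed

lemma enum_exists:
  fixes S :: "real set"
  assumes inf: "infinite S" and fin: "\<And>X. finite {v\<in>S. v \<le> X}"
  shows "\<exists>f::nat\<Rightarrow>real. strict_mono f \<and> range f = S"
proof -
  define g where "g v = card {w\<in>S. w < v}" for v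
  have fin2: "finite {w\<in>S. w < v}" for v
    by (rule finite_subset[OF _ fin[of v]]) auto
  have gmono: "g u < g v" if "u \<in> S" "v \<in> S" "u < v" for u v
    unfolding g_def using that by (intro psubset_card_mono fin2) auto
  have inj: "inj_on g S"
  proof (rule inj_onI)
    fix u v assume uv: "u \<in> S" "v \<in> S" "g u = g v"
    show "u = v"
    proof (rule ccontr)
      assume "u \<noteq> v"
      then consider "u < v" | "v < u" by linarith
      then show False
      proof cases
        case 1 then show ?thesis using gmono[OF uv(1) uv(2)] uv(3) by simp
      next
        case 2 then show ?thesis using gmono[OF uv(2) uv(1)] uv(3) by simp
      qed
    qed
  qed
  define T where "T = g ` S"
  have infT: "infinite T"
  proof
    assume "finite T"
    then have "finite S" unfolding T_def by (rule finite_imageD[OF _ inj])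
    then show False using inf by simp
  qed
  define f where "f = inv_into S g \<circ> enumerate T"
  have rT: "range (enumerate T) = T"
    using bij_enumerate[OF infT] by (simp add: bij_betw_def)
  have "strict_mono f"
  proof (rule strict_monoI)
    fix m n :: nat assume mn: "m < n"
    have lt: "enumerate T m < enumerate T n" using enumerate_mono[OF mn infT] .
    have a: "enumerate T m \<in> g ` S" "enumerate T n \<in> g ` S" using rT T_def by auto
    have ia: "inv_into S g (enumerate T m) \<in> S" "inv_into S g (enumerate T n) \<in> S"
      using a by (auto intro: inv_into_into)
    have ga: "g (inv_into S g (enumerate T m)) = enumerate T m" "g (inv_into S g (enumerate T n)) = enumerate T n"
      using a by (auto intro: f_inv_into_f)
    show "f m < f n"
    proof (rule ccontr)
      assume "\<not> f m < f n"
      then have "f n \<le> f m" by simp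
      then consider "f n = f m" | "f n < f m" by fastforce
      then show False
      proof cases
        case 1
        then have "enumerate T n = enumerate T m" using ga by (simp add: f_def)
        then show ?thesis using lt by simp
      next
        case 2 then show ?thesis using gmono[OF ia(2) ia(1)] ga lt unfolding f_def by auto
      qed
    qed
  qed
  moreover have "range f = inv_into S g ` range (enumerate T)"
    by (simp add: f_def image_comp)
  then have "range f = S" using rT inj unfolding T_def by simp
  ultimately show ?thesis by (intro exI[of _ f]) simp
qed

lemma nu_props:
  assumes "beurling_primes q"
  shows "strict_mono (beurling_nu q) \<and> range (beurling_nu q) = beurling_integers q"
proof -
  have "\<exists>f::nat\<Rightarrow>real. strict_mono f \<and> range f = beurling_integers q"
    by (rule enum_exists[OF bi_infinite[OF assms] bi_finite[OF assms]])
  then show ?thesis unfolding beurling_nu_def by (rule someI_ex)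
qed

lemma nu_ge1: "beurling_primes q \<Longrightarrow> 1 \<le> beurling_nu q n"
proof -
  assume bp: "beurling_primes q"
  have "range (beurling_nu q) = beurling_integers q" using nu_props[OF bp] by blast
  then have "beurling_nu q n \<in> beurling_integers q" using rangeI[of "beurling_nu q" n] by simp
  then show ?thesis by (rule bi_ge1[OF bp])
qed


lemma exp_diff_bound:
  fixes s :: complex and u v :: real
  assumes "v \<le> u" "0 \<le> Re s"
  shows "cmod (exp (s * of_real u) - exp (s * of_real v)) \<le> cmod s * exp (Re s * u) * (u - v)"
proof -
  define S where "S = {z. v \<le> Re z} \<inter> {z. Re z \<le> u} \<inter> {z. Im z \<le> 0} \<inter> {z::complex. 0 \<le> Im z}"
  have cS: "convex S" unfolding S_def
    by (intro convex_Int convex_halfspace_Re_ge convex_halfspace_Re_le convex_halfspace_Im_le convex_halfspace_Im_ge)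
  have d: "((\<lambda>z. exp (s*z)) has_field_derivative s * exp (s*z)) (at z within S)" for z
    by (auto intro!: derivative_eq_intros)
  have uS: "complex_of_real u \<in> S" "complex_of_real v \<in> S" using assms by (simp_all add: S_def)
  have b: "norm (s * exp (s*z)) \<le> cmod s * exp (Re s * u)" if "z \<in> S" for z
  proof -
    have "Im z = 0" using that by (simp add: S_def)
    then have "Re (s*z) = Re s * Re z" by simp
    moreover have "Re s * Re z \<le> Re s * u" using that assms by (auto simp: S_def intro: mult_left_mono)
    ultimately have "Re (s*z) \<le> Re s * u" by linarith
    then have "exp (Re (s*z)) \<le> exp (Re s * u)" by simp
    moreover have "norm (s * exp (s*z)) = cmod s * exp (Re (s*z))" by (simp add: norm_mult norm_exp_eq_Re)
    ultimately show ?thesis by (simp add: mult_left_mono)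
  qed
  have "norm ((\<lambda>z. exp (s*z)) (of_real u) - (\<lambda>z. exp (s*z)) (of_real v)) \<le> cmod s * exp (Re s * u) * norm (of_real u - of_real v :: complex)"
    by (rule field_differentiable_bound[OF cS d b uS(1) uS(2)])
  also have "norm (of_real u - of_real v :: complex) = u - v"
    using assms by (simp add: of_real_diff[symmetric] del: of_real_diff)
  finally show ?thesis by simp
qed

lemma re_pos:
  fixes \<nu> :: "nat \<Rightarrow> real"
  assumes ge1: "\<forall>n. 1 \<le> \<nu> n" and sm: "summable (\<lambda>n. complex_of_real (\<nu> n) powr (-s))"
  shows "0 < Re s"
proof (rule ccontr)
  assume neg: "\<not> 0 < Re s"
  have "(\<lambda>n. complex_of_real (\<nu> n) powr (-s)) \<longlonglongrightarrow> 0" using summable_LIMSEQ_zero[OF sm] .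
  then have lim: "(\<lambda>n. cmod (complex_of_real (\<nu> n) powr (-s))) \<longlonglongrightarrow> 0" by (rule tendsto_norm_zero)
  have "1 \<le> cmod (complex_of_real (\<nu> n) powr (-s))" for n
  proof -
    have p0: "0 \<le> \<nu> n" using ge1 by (meson order.trans zero_le_one)
    have "cmod (complex_of_real (\<nu> n) powr (-s)) = \<nu> n powr (- Re s)"
      using p0 by (subst norm_powr_real_powr) auto
    also have "1 \<le> \<nu> n powr (- Re s)" using ge1 neg by (intro ge_one_powr_ge_zero) auto
    finally show ?thesis .
  qed
  then have "1 \<le> (0::real)" by (intro LIMSEQ_le_const[OF lim]) auto
  then show False by simp
qed

lemma powr_exp_c: "0 < x \<Longrightarrow> complex_of_real x powr z = exp (z * of_real (ln x))"
  by (simp add: powr_def Ln_of_real)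

lemma count_bound:
  fixes \<nu> :: "nat \<Rightarrow> real" and s0 :: complex
  assumes mono: "strict_mono \<nu>" and ge1: "\<forall>n. 1 \<le> \<nu> n"
    and sm: "summable (\<lambda>n. complex_of_real (\<nu> n) powr (-s0))" and lt: "Re s0 < \<sigma>1"
  shows "\<exists>C>0. \<forall>N. real (Suc N) \<le> C * \<nu> N powr \<sigma>1"
proof -
  define \<sigma>0 where "\<sigma>0 = Re s0"
  have s0pos: "0 < \<sigma>0" unfolding \<sigma>0_def by (rule re_pos[OF ge1 sm])
  have pos: "0 < \<nu> n" for n using ge1 by (meson less_le_trans zero_less_one)
  define L where "L n = ln (\<nu> n)" for n
  have L0: "0 \<le> L n" for n unfolding L_def using ge1 by simp
  have Lmono: "L m \<le> L n" if "m \<le> n" for m n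
    unfolding L_def using pos mono that by (simp add: strict_mono_less_eq)
  define a where "a n = exp (- s0 * of_real (L n))" for n
  define c where "c n = exp (s0 * of_real (L n))" for n
  have ac: "a n * c n = 1" for n unfolding a_def c_def by (simp add: mult_exp_exp)
  have "a = (\<lambda>n. complex_of_real (\<nu> n) powr (-s0))"
    unfolding a_def L_def using pos by (simp add: powr_exp_c)
  then have suma: "summable a" using sm by simp
  define A where "A N = (\<Sum>n<N. a n)" for N
  have "Bseq A" unfolding A_def using suma
    by (simp add: convergent_imp_Bseq summable_iff_convergent)
  then obtain M where M: "M > 0" "\<And>N. cmod (A N) \<le> M" by (meson BseqE)
  have abel: "(\<Sum>n\<le>N. a n * c n) = A (Suc N) * c N - (\<Sum>n<N. A (Suc n) * (c (Suc n) - c n))" for N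
  proof (induction N)
    case 0 then show ?case by (simp add: A_def)
  next
    case (Suc N)
    have "A (Suc (Suc N)) = A (Suc N) + a (Suc N)" by (simp add: A_def)
    then show ?case using Suc by (simp add: algebra_simps)
  qed
  have normc: "cmod (c n) = exp (\<sigma>0 * L n)" for n
    unfolding c_def \<sigma>0_def by (simp add: norm_exp_eq_Re)
  have diff: "cmod (c (Suc n) - c n) \<le> cmod s0 * exp (\<sigma>0 * L N) * (L (Suc n) - L n)" if "n \<in> {..<N}" for n N
  proof -
    have "cmod (c (Suc n) - c n) \<le> cmod s0 * exp (\<sigma>0 * L (Suc n)) * (L (Suc n) - L n)"
      unfolding c_def \<sigma>0_def using Lmono[of n "Suc n"] s0pos unfolding \<sigma>0_def
      by (intro exp_diff_bound) auto
    also have "\<dots> \<le> cmod s0 * exp (\<sigma>0 * L N) * (L (Suc n) - L n)"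
      using Lmono[of "Suc n" N] Lmono[of n "Suc n"] s0pos that lessThan_iff
      by (intro mult_right_mono mult_left_mono) auto
    finally show ?thesis .
  qed
  define K where "K N = cmod s0 * exp (\<sigma>0 * L N)" for N
  define \<epsilon> where "\<epsilon> = \<sigma>1 - \<sigma>0"
  have epos: "0 < \<epsilon>" unfolding \<epsilon>_def \<sigma>0_def using lt by simp
  define C where "C = M * (1 + cmod s0 / \<epsilon>)"
  have Cpos: "0 < C" unfolding C_def using M epos by (simp add: add_pos_nonneg)
  have "real (Suc N) \<le> C * \<nu> N powr \<sigma>1" for N
  proof -
    have "complex_of_nat (Suc N) = (\<Sum>n\<le>N. a n * c n)" by (simp add: ac)
    then have h0: "real (Suc N) = cmod (\<Sum>n\<le>N. a n * c n)" by (metis norm_of_nat)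
    have h1: "cmod (\<Sum>n\<le>N. a n * c n) \<le> cmod (A (Suc N) * c N) + cmod (\<Sum>n<N. A (Suc n) * (c (Suc n) - c n))"
      unfolding abel by (rule norm_triangle_ineq4)
    have h2: "cmod (A (Suc N) * c N) \<le> M * exp (\<sigma>0 * L N)"
      unfolding norm_mult normc using M by (intro mult_right_mono) auto
    have h3: "cmod (\<Sum>n<N. A (Suc n) * (c (Suc n) - c n)) \<le> (\<Sum>n<N. M * (K N * (L (Suc n) - L n)))"
    proof -
      have t: "cmod (A (Suc n) * (c (Suc n) - c n)) \<le> M * (K N * (L (Suc n) - L n))" if "n \<in> {..<N}" for n
        unfolding norm_mult K_def using that
        by (intro mult_mono[OF M(2) diff]) (use M(1) in auto)
      show ?thesis by (rule order.trans[OF norm_sum sum_mono[OF t]])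
    qed
    have h4: "(\<Sum>n<N. M * (K N * (L (Suc n) - L n))) = M * K N * (\<Sum>n<N. L (Suc n) - L n)"
      by (simp add: sum_distrib_left mult.assoc)
    have h5: "(\<Sum>n<N. L (Suc n) - L n) = L N - L 0" by (rule sum_lessThan_telescope)
    have h6: "M * K N * (L N - L 0) \<le> M * K N * L N"
      using M L0[of 0] unfolding K_def by (intro mult_left_mono) auto
    have h7: "M * exp (\<sigma>0 * L N) * (1 + cmod s0 * L N) = M * exp (\<sigma>0 * L N) + M * K N * L N"
      unfolding K_def by (simp add: algebra_simps)
    have 1: "real (Suc N) \<le> M * exp (\<sigma>0 * L N) * (1 + cmod s0 * L N)"
    proof -
      have h45: "(\<Sum>n<N. M * (K N * (L (Suc n) - L n))) \<le> M * K N * L N" using h4 h5 h6 by simp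
      show ?thesis unfolding h7 using h0 h1 h2 h3 h45 by linarith
    qed
    have e1: "\<epsilon> * L N \<le> exp (\<epsilon> * L N)" using exp_ge_add_one_self[of "\<epsilon> * L N"] by linarith
    have e2: "L N \<le> exp (\<epsilon> * L N) / \<epsilon>" using e1 epos by (simp add: pos_le_divide_eq mult.commute)
    have e3: "1 \<le> exp (\<epsilon> * L N)" using epos L0[of N] by simp
    have "cmod s0 * L N \<le> cmod s0 * (exp (\<epsilon> * L N) / \<epsilon>)"
      by (rule mult_left_mono[OF e2 norm_ge_zero])
    then have "1 + cmod s0 * L N \<le> exp (\<epsilon> * L N) + cmod s0 * (exp (\<epsilon> * L N) / \<epsilon>)"
      using e3 by linarith
    also have "\<dots> = (1 + cmod s0 / \<epsilon>) * exp (\<epsilon> * L N)" by (simp add: algebra_simps)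
    finally have 2: "1 + cmod s0 * L N \<le> (1 + cmod s0 / \<epsilon>) * exp (\<epsilon> * L N)" .
    have Mp: "0 \<le> M * exp (\<sigma>0 * L N)" using M by simp
    have "real (Suc N) \<le> M * exp (\<sigma>0 * L N) * ((1 + cmod s0 / \<epsilon>) * exp (\<epsilon> * L N))"
      by (rule order.trans[OF 1 mult_left_mono[OF 2 Mp]])
    also have "\<dots> = C * (exp (\<sigma>0 * L N) * exp (\<epsilon> * L N))"
      unfolding C_def by (simp add: algebra_simps)
    also have "exp (\<sigma>0 * L N) * exp (\<epsilon> * L N) = exp (\<sigma>1 * L N)"
      unfolding \<epsilon>_def by (simp add: mult_exp_exp algebra_simps)
    also have "exp (\<sigma>1 * L N) = \<nu> N powr \<sigma>1"
      unfolding L_def using pos[of N] by (simp add: powr_def)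
    finally show ?thesis .
  qed
  then show ?thesis using Cpos by blast
qed


lemma sigma_real:
  assumes bp: "beurling_primes q" and fin: "beurling_sigma_c q < \<infinity>"
  shows "\<exists>\<sigma>\<ge>0. beurling_sigma_c q = ereal \<sigma>"
proof -
  have ge: "0 \<le> x" if xin: "x \<in> {ereal (Re s) |s. summable (\<lambda>n. complex_of_real (beurling_nu q n) powr (- s))}" for x
  proof -
    obtain s where s: "x = ereal (Re s)" "summable (\<lambda>n. complex_of_real (beurling_nu q n) powr (- s))"
      using xin by blast
    have "0 < Re s" using re_pos[OF _ s(2)] nu_ge1[OF bp] by blast
    then show ?thesis using s(1) by simp
  qed
  have "0 \<le> beurling_sigma_c q" unfolding beurling_sigma_c_def by (rule Inf_greatest) (rule ge)
  then show ?thesis using fin by (cases "beurling_sigma_c q") auto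
qed

lemma get_s0:
  assumes "beurling_sigma_c q = ereal \<sigma>" "\<sigma> < \<sigma>1"
  shows "\<exists>s0. summable (\<lambda>n. complex_of_real (beurling_nu q n) powr (- s0)) \<and> Re s0 < \<sigma>1"
proof -
  have "Inf {ereal (Re s) |s. summable (\<lambda>n. complex_of_real (beurling_nu q n) powr (- s))} < ereal \<sigma>1"
    using assms unfolding beurling_sigma_c_def by simp
  then obtain x where "x \<in> {ereal (Re s) |s. summable (\<lambda>n. complex_of_real (beurling_nu q n) powr (- s))}" "x < ereal \<sigma>1"
    by (auto simp: Inf_less_iff)
  then show ?thesis by auto
qed

lemma count_le:
  fixes \<nu> :: "nat \<Rightarrow> real"
  assumes cnt: "\<forall>N. real (Suc N) \<le> C * \<nu> N powr \<sigma>1" and C: "0 < C" and s1: "0 \<le> \<sigma>1"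
    and ge1: "\<forall>n. 1 \<le> \<nu> n" and Y: "1 \<le> Y"
  shows "finite {m. \<nu> m \<le> Y} \<and> real (card {m. \<nu> m \<le> Y}) \<le> C * Y powr \<sigma>1"
proof -
  define T where "T = C * Y powr \<sigma>1"
  have T0: "0 \<le> T" unfolding T_def using C by simp
  have sub: "{m. \<nu> m \<le> Y} \<subseteq> {..<nat \<lfloor>T\<rfloor>}"
  proof
    fix m assume "m \<in> {m. \<nu> m \<le> Y}"
    then have m: "\<nu> m \<le> Y" by simp
    have "\<nu> m powr \<sigma>1 \<le> Y powr \<sigma>1"
      using ge1 m s1 by (intro powr_mono2) (auto intro: order.trans[OF zero_le_one])
    then have "real (Suc m) \<le> T" unfolding T_def using cnt[rule_format, of m] C
      by (meson mult_left_mono less_imp_le order.trans)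
    then have "int (Suc m) \<le> \<lfloor>T\<rfloor>" by (simp add: le_floor_iff)
    then show "m \<in> {..<nat \<lfloor>T\<rfloor>}" by simp
  qed
  have fin: "finite {m. \<nu> m \<le> Y}" by (rule finite_subset[OF sub]) simp
  have "card {m. \<nu> m \<le> Y} \<le> nat \<lfloor>T\<rfloor>" using card_mono[OF _ sub] by simp
  then have "real (card {m. \<nu> m \<le> Y}) \<le> real (nat \<lfloor>T\<rfloor>)" by simp
  also have "\<dots> \<le> T" using T0 by simp
  finally show ?thesis using fin T_def by simp
qed

lemma ae_finite_r:
  assumes bp: "beurling_primes q" and sig: "beurling_sigma_c q = ereal \<sigma>" and s0: "0 \<le> \<sigma>"
    and r: "2 * \<sigma> < r"
  shows "AE x in lborel. finite {(m, n). \<bar>x - beurling_nu q m / beurling_nu q n\<bar> < beurling_nu q n powr (- r)}"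
proof -
  define \<nu> where "\<nu> = beurling_nu q"
  have mono: "strict_mono \<nu>" unfolding \<nu>_def using nu_props[OF bp] by blast
  have ge1: "\<forall>n. 1 \<le> \<nu> n" unfolding \<nu>_def using nu_ge1[OF bp] by blast
  have pos: "0 < \<nu> n" for n using ge1 by (meson less_le_trans zero_less_one)
  define \<sigma>1 where "\<sigma>1 = (\<sigma> + r/2) / 2"
  have s1: "\<sigma> < \<sigma>1" "2 * \<sigma>1 < r" "0 < \<sigma>1" unfolding \<sigma>1_def using r s0 by auto
  obtain s where s: "summable (\<lambda>n. complex_of_real (\<nu> n) powr (- s))" "Re s < \<sigma>1"
    using get_s0[OF sig s1(1)] unfolding \<nu>_def by blast
  obtain C where C: "0 < C" "\<forall>N. real (Suc N) \<le> C * \<nu> N powr \<sigma>1"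
    using count_bound[OF mono ge1 s(1) s(2)] by blast
  define P where "P x = finite {(m, n). \<bar>x - \<nu> m / \<nu> n\<bar> < \<nu> n powr (- r)}" for x
  define p where "p = (r - \<sigma>1) / \<sigma>1"
  have p1: "1 < p" unfolding p_def using s1 by (simp add: field_simps)
  define d where "d n = \<nu> n powr (- r)" for n
  have d0: "0 < d n" for n unfolding d_def using pos[of n] by simp
  have d1: "d n \<le> 1" for n
  proof -
    have "\<nu> n powr (- r) \<le> 1 powr (- r)" using ge1 r s0 by (intro powr_mono2') auto
    then show ?thesis unfolding d_def by simp
  qed
  have main: "AE x in lborel. \<bar>x\<bar> < real K \<longrightarrow> P x" for K :: nat
  proof -
    define S where "S n = {m. \<nu> m \<le> (real K + 1) * \<nu> n}" for n
    define E where "E n = (\<Union>m\<in>S n. {\<nu> m / \<nu> n - d n <..< \<nu> m / \<nu> n + d n})" for n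
    have Y1: "1 \<le> (real K + 1) * \<nu> n" for n
      using ge1 one_le_mult_real[of "real K + 1" "\<nu> n"] by simp
    have finS: "finite (S n)" and cardS: "real (card (S n)) \<le> C * ((real K + 1) * \<nu> n) powr \<sigma>1" for n
      using count_le[OF C(2) C(1) less_imp_le[OF s1(3)] ge1 Y1[of n]] unfolding S_def by auto
    have Esets: "E n \<in> sets lborel" for n
      unfolding E_def by (intro sets.finite_UN finS) simp
    have Ssub: "\<nu> m / \<nu> n \<le> real K + 1" if "m \<in> S n" for m n
      using that pos[of n] unfolding S_def by (simp add: divide_le_eq)
    have Esub: "E n \<subseteq> {-1 <..< real K + 2}" for n
    proof
      fix x assume "x \<in> E n"
      then obtain m where m: "m \<in> S n" "\<nu> m / \<nu> n - d n < x" "x < \<nu> m / \<nu> n + d n"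
        unfolding E_def by auto
      have "0 \<le> \<nu> m / \<nu> n" using pos[of m] pos[of n] by simp
      then show "x \<in> {-1 <..< real K + 2}" using m Ssub[OF m(1)] d1[of n] by auto
    qed
    have Efin: "emeasure lborel (E n) < \<infinity>" for n
    proof -
      have "emeasure lborel (E n) \<le> emeasure lborel {-1 <..< real K + 2}"
        by (rule emeasure_mono[OF Esub]) simp
      also have "\<dots> < \<infinity>" by simp
      finally show ?thesis .
    qed
    have Emeas: "measure lborel (E n) \<le> 2 * C * (real K + 1) powr \<sigma>1 * \<nu> n powr (\<sigma>1 - r)" for n
    proof -
      have "measure lborel (E n) \<le> (\<Sum>m\<in>S n. measure lborel {\<nu> m / \<nu> n - d n <..< \<nu> m / \<nu> n + d n})"
        unfolding E_def by (rule measure_UNION_le[OF finS]) simp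
      also have "\<dots> = real (card (S n)) * (2 * d n)"
        using d0[of n] by simp
      also have "\<dots> \<le> C * ((real K + 1) * \<nu> n) powr \<sigma>1 * (2 * d n)"
        using cardS[of n] d0[of n] by (intro mult_right_mono) auto
      also have "\<dots> = 2 * C * (real K + 1) powr \<sigma>1 * (\<nu> n powr \<sigma>1 * \<nu> n powr (- r))"
        unfolding d_def by (simp add: powr_mult)
      also have "\<nu> n powr \<sigma>1 * \<nu> n powr (- r) = \<nu> n powr (\<sigma>1 - r)"
        by (simp add: powr_add[symmetric])
      finally show ?thesis .
    qed
    have nub: "\<nu> n powr (\<sigma>1 - r) \<le> C powr p * real (Suc n) powr (- p)" for n
    proof -
      have ex: "\<sigma>1 * (- p) = \<sigma>1 - r" unfolding p_def using s1(3) by (simp add: field_simps)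
      have e: "\<nu> n powr (\<sigma>1 - r) = (\<nu> n powr \<sigma>1) powr (- p)"
        by (simp only: powr_powr ex)
      have "real (Suc n) / C \<le> \<nu> n powr \<sigma>1" using C by (simp add: divide_le_eq mult.commute)
      then have "(\<nu> n powr \<sigma>1) powr (- p) \<le> (real (Suc n) / C) powr (- p)"
        using p1 C by (intro powr_mono2') auto
      also have "\<dots> = real (Suc n) powr (- p) / C powr (- p)" by (rule powr_divide)
      also have "\<dots> = C powr p * real (Suc n) powr (- p)"
        using C by (simp add: powr_minus divide_inverse)
      finally show ?thesis using e by simp
    qed
    define B where "B = 2 * C * (real K + 1) powr \<sigma>1"
    have B0: "0 \<le> B" unfolding B_def using C by simp
    have sumg: "summable (\<lambda>n. B * (C powr p * real (Suc n) powr (- p)))"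
    proof -
      have "summable (\<lambda>n. real n powr (- p))" using p1 by (simp add: summable_real_powr_iff)
      then have "summable (\<lambda>n. real (Suc n) powr (- p))"
        using summable_Suc_iff[of "\<lambda>n. real n powr (- p)"] by simp
      then show ?thesis by (intro summable_mult)
    qed
    have summ: "summable (\<lambda>n. measure lborel (E n))"
    proof (rule summable_comparison_test'[OF sumg])
      fix n :: nat
      have "norm (measure lborel (E n)) = measure lborel (E n)" by simp
      also have "\<dots> \<le> B * \<nu> n powr (\<sigma>1 - r)" using Emeas[of n] unfolding B_def .
      also have "\<dots> \<le> B * (C powr p * real (Suc n) powr (- p))"
        by (rule mult_left_mono[OF nub B0])
      finally show "norm (measure lborel (E n)) \<le> B * (C powr p * real (Suc n) powr (- p))" .
    qed
    have ae: "AE x in lborel. eventually (\<lambda>n. x \<in> space lborel - E n) sequentially"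
      by (rule borel_cantelli_AE1[OF Esets Efin summ])
    show ?thesis
    proof (rule AE_mp[OF ae], rule AE_I2, intro impI)
      fix x assume ev: "eventually (\<lambda>n. x \<in> space lborel - E n) sequentially" and xK: "\<bar>x\<bar> < real K"
      obtain N where N: "\<And>n. n \<ge> N \<Longrightarrow> x \<notin> E n"
        using ev unfolding eventually_sequentially by auto
      have "{(m, n). \<bar>x - \<nu> m / \<nu> n\<bar> < \<nu> n powr (- r)} \<subseteq> (\<lambda>(n, m). (m, n)) ` (SIGMA n:{..<N}. S n)"
      proof
        fix z assume "z \<in> {(m, n). \<bar>x - \<nu> m / \<nu> n\<bar> < \<nu> n powr (- r)}"
        then obtain m n where z: "z = (m, n)" and mn: "\<bar>x - \<nu> m / \<nu> n\<bar> < d n"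
          unfolding d_def by auto
        have "\<nu> m / \<nu> n < real K + 1" using mn xK d1[of n] by linarith
        then have mS: "m \<in> S n" unfolding S_def using pos[of n] by (simp add: divide_less_eq)
        have "\<nu> m / \<nu> n - d n < x \<and> x < \<nu> m / \<nu> n + d n" using mn by (simp add: abs_less_iff)
        then have "x \<in> E n" unfolding E_def using mS by auto
        then have "n < N" using N by (meson not_le)
        then show "z \<in> (\<lambda>(n, m). (m, n)) ` (SIGMA n:{..<N}. S n)"
          using z mS by force
      qed
      moreover have "finite ((\<lambda>(n, m). (m, n)) ` (SIGMA n:{..<N}. S n))"
        using finS by (intro finite_imageI finite_SigmaI) auto
      ultimately show "P x" unfolding P_def by (rule finite_subset)
    qed
  qed
  have "AE x in lborel. \<forall>K::nat. \<bar>x\<bar> < real K \<longrightarrow> P x"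
    using main by (subst AE_all_countable) blast
  then show ?thesis
  proof (rule AE_mp, intro AE_I2 impI)
    fix x assume "\<forall>K::nat. \<bar>x\<bar> < real K \<longrightarrow> P x"
    moreover obtain K :: nat where "\<bar>x\<bar> < real K" using reals_Archimedean2 by blast
    ultimately have "P x" by blast
    then show "finite {(m, n). \<bar>x - beurling_nu q m / beurling_nu q n\<bar> < beurling_nu q n powr (- r)}"
      unfolding P_def \<nu>_def .
  qed
qed

theorem proposition3p1:
  fixes q :: "nat \<Rightarrow> real"
  assumes "beurling_primes q"
    and "beurling_sigma_c q < \<infinity>"
  shows "AE x in lborel. beurling_mu q x \<le> 2 * beurling_sigma_c q"
proof -
  obtain \<sigma> where s0: "0 \<le> \<sigma>" and sig: "beurling_sigma_c q = ereal \<sigma>"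
    using sigma_real[OF assms] by blast
  define R where "R k = 2 * \<sigma> + 1 / real (Suc k)" for k
  have "AE x in lborel. \<forall>k. finite {(m, n). \<bar>x - beurling_nu q m / beurling_nu q n\<bar> < beurling_nu q n powr (- R k)}"
    unfolding AE_all_countable
  proof
    fix k
    show "AE x in lborel. finite {(m, n). \<bar>x - beurling_nu q m / beurling_nu q n\<bar> < beurling_nu q n powr (- R k)}"
      by (rule ae_finite_r[OF assms(1) sig s0]) (simp add: R_def)
  qed
  then show ?thesis
  proof (rule AE_mp, intro AE_I2 impI)
    fix x assume fk: "\<forall>k. finite {(m, n). \<bar>x - beurling_nu q m / beurling_nu q n\<bar> < beurling_nu q n powr (- R k)}"
    show "beurling_mu q x \<le> 2 * beurling_sigma_c q"
      unfolding sig
    proof (rule ereal_le_epsilon2)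
      fix e :: real assume e: "0 < e"
      obtain k where k: "inverse (real (Suc k)) < e" using reals_Archimedean[OF e] by blast
      define r where "r = 2 * \<sigma> + e"
      have sub: "{(m, n). \<bar>x - beurling_nu q m / beurling_nu q n\<bar> < beurling_nu q n powr (- r)}
          \<subseteq> {(m, n). \<bar>x - beurling_nu q m / beurling_nu q n\<bar> < beurling_nu q n powr (- R k)}"
      proof (clarsimp)
        fix m n assume h: "\<bar>x - beurling_nu q m / beurling_nu q n\<bar> < beurling_nu q n powr (- r)"
        have "beurling_nu q n powr (- r) \<le> beurling_nu q n powr (- R k)"
          using nu_ge1[OF assms(1)] k unfolding r_def R_def by (intro powr_mono) (auto simp: inverse_eq_divide)
        then show "\<bar>x - beurling_nu q m / beurling_nu q n\<bar> < beurling_nu q n powr (- R k)"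
          using h by linarith
      qed
      have "ereal r \<in> {ereal r |r. r > 0 \<and>
            finite {(m, n). \<bar>x - beurling_nu q m / beurling_nu q n\<bar> < beurling_nu q n powr (- r)}}"
        using finite_subset[OF sub fk[rule_format, of k]] s0 e unfolding r_def by auto
      then have "beurling_mu q x \<le> ereal r" unfolding beurling_mu_def by (rule Inf_lower)
      then show "beurling_mu q x \<le> 2 * ereal \<sigma> + ereal e" unfolding r_def by simp
    qed
  qed
qed

end
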